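(* Let $d\ge1$, $p\ge1$, $\sigma>0$ and let $F$, $U$ satisfy the standing assumption of the context. For every $m\in\mathcal P_p(\mathbb R^d)$, the measure $\hat m$ with density \[ \hat m(x)=\frac{1}{Z_m}\exp\Bigl(-\frac{2}{\sigma^2}\frac{\delta F}{\delta m}(m,x)-U(x)\Bigr), \] where $Z_m$ is the normalization constant, is well defined and belongs to $\mathcal P_p(\mathbb R^d)$. Moreover, there exist constants $c,C$ with $0<c<1<C<+\infty$ such that for every $m\in\mathcal P_p(\mathbb R^d)$ and every $x\in\mathbb R^d$, $c\,e^{-U(x)}\le\hat m(x)\le C\,e^{-U(x)}$. Finally, there exists a constant $L>0$ such that for all $m,m'\in\mathcal P_p(\mathbb R^d)$ and every $x\in\mathbb R^d$, $|\hat m(x)-\hat m'(x)|\le L\,\mathcal W_p(m,m')\,e^{-U(x)}$, where $\hat m'$ is defined from $m'$ in the same way.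
   Context: $\mathcal P(\mathbb R^d)$ denotes the Borel probability measures on $\mathbb R^d$, $\mathcal P_p(\mathbb R^d)$ those with finite $p$-th moment, $\mathcal W_p$ the $p$-Wasserstein distance. Standing assumption: (a) $F:\mathcal P(\mathbb R^d)\to\mathbb R$ is non-negative and there is a continuous function $\frac{\delta F}{\delta m}:\mathcal P(\mathbb R^d)\times\mathbb R^d\to\mathbb R$ such that for all $m_0,m_1$, $F(m_1)-F(m_0)=\int_0^1\int\frac{\delta F}{\delta m}(m_\lambda,x)\,(m_1-m_0)(dx)\,d\lambda$ with $m_\lambda=(1-\lambda)m_0+\lambda m_1$; and there are $L_F,M_F>0$ with $|\frac{\delta F}{\delta m}(m,x)-\frac{\delta F}{\delta m}(m',x')|\le L_F(\mathcal W_p(m,m')+|x-x'|)$ and $|\frac{\delta F}{\delta m}(m,x)|\le M_F$ for all $m,m',x,x'$. (b) $U:\mathbb R^d\to\mathbb R$ is measurable, $\int e^{-U}dx=1$, $\operatorname{ess\,inf}U>-\infty$, $\liminf_{|x|\to\infty}U(x)/|x|^p>0$. *)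

theory Defs
  imports "HOL-Probability.Probability"
begin

definition Prob :: "('a::euclidean_space) measure set" where
  "Prob = {m. prob_space m \<and> sets m = sets borel}"

definition Prob_p :: "real \<Rightarrow> ('a::euclidean_space) measure set" where
  "Prob_p p = {m. m \<in> Prob \<and> integrable m (\<lambda>x. norm x powr p)}"

definition couplings :: "('a::euclidean_space) measure \<Rightarrow> 'a measure \<Rightarrow> ('a \<times> 'a) measure set" where
  "couplings m m' = {\<pi>. prob_space \<pi> \<and> sets \<pi> = sets borel \<and>
      distr \<pi> borel fst = m \<and> distr \<pi> borel snd = m'}"

definition ot_cost :: "real \<Rightarrow> ('a::euclidean_space) measure \<Rightarrow> 'a measure \<Rightarrow> ennreal" where
  "ot_cost p m m' = (INF \<pi>\<in>couplings m m'. \<integral>\<^sup>+ z. ennreal (dist (fst z) (snd z) powr p) \<partial>\<pi>)"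

definition Wass :: "real \<Rightarrow> ('a::euclidean_space) measure \<Rightarrow> 'a measure \<Rightarrow> ennreal" where
  "Wass p m m' = (if ot_cost p m m' = \<infinity> then \<infinity>
                  else ennreal (enn2real (ot_cost p m m') powr (1 / p)))"

definition mixture :: "real \<Rightarrow> ('a::euclidean_space) measure \<Rightarrow> 'a measure \<Rightarrow> 'a measure" where
  "mixture l m0 m1 = measure_of UNIV (sets borel)
      (\<lambda>A. ennreal ((1 - l) * measure m0 A + l * measure m1 A))"

definition Zconst :: "real \<Rightarrow> (('a::euclidean_space) measure \<Rightarrow> 'a \<Rightarrow> real) \<Rightarrow> ('a \<Rightarrow> real)
    \<Rightarrow> 'a measure \<Rightarrow> real" where
  "Zconst \<sigma> dF U m = (\<integral>x. exp (- (2 / \<sigma>\<^sup>2) * dF m x - U x) \<partial>lborel)"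

definition hat_dens :: "real \<Rightarrow> (('a::euclidean_space) measure \<Rightarrow> 'a \<Rightarrow> real) \<Rightarrow> ('a \<Rightarrow> real)
    \<Rightarrow> 'a measure \<Rightarrow> 'a \<Rightarrow> real" where
  "hat_dens \<sigma> dF U m x = exp (- (2 / \<sigma>\<^sup>2) * dF m x - U x) / Zconst \<sigma> dF U m"

end

theory Submission
  imports Defs
begin

lemma exp_abs_nn_finite:
  fixes \<beta> :: real assumes b: "\<beta> > 0"
  shows "(\<integral>\<^sup>+t. ennreal (exp (- \<beta> * \<bar>t\<bar>)) \<partial>lborel) < \<infinity>"
proof -
  let ?e = "\<lambda>t. ennreal (exponential_density \<beta> t)"
  have m[measurable]: "(\<lambda>t. exponential_density \<beta> t) \<in> borel_measurable borel"
    by (simp add: exponential_density_def)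
  have one: "(\<integral>\<^sup>+t. ?e t \<partial>lborel) = 1"
  proof -
    interpret prob_space "density lborel (exponential_density \<beta>)"
      using prob_space_exponential_density[OF b] .
    have "emeasure (density lborel (exponential_density \<beta>)) UNIV = 1"
      using emeasure_space_1 by simp
    then show ?thesis by (simp add: emeasure_density)
  qed
  have two: "(\<integral>\<^sup>+t. ?e (-t) \<partial>lborel) = 1"
    using nn_integral_real_affine[of ?e "-1" 0] one by simp
  have le: "ennreal (exp (- \<beta> * \<bar>t\<bar>)) \<le> ennreal (1/\<beta>) * (?e t + ?e (-t))" for t
  proof -
    have "exp (- \<beta> * \<bar>t\<bar>) \<le> (1/\<beta>) * (exponential_density \<beta> t + exponential_density \<beta> (-t))"
      using b by (auto simp: exponential_density_def field_simps abs_if)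
    then show ?thesis
      by (metis (no_types, lifting) b divide_nonneg_pos ennreal_leI ennreal_mult' ennreal_plus
          exponential_density_nonneg less_eq_real_def zero_le_one)
  qed
  have "(\<integral>\<^sup>+t. ennreal (exp (- \<beta> * \<bar>t\<bar>)) \<partial>lborel) \<le> (\<integral>\<^sup>+t. ennreal (1/\<beta>) * (?e t + ?e (-t)) \<partial>lborel)"
    by (intro nn_integral_mono le)
  also have "\<dots> = ennreal (1/\<beta>) * ((\<integral>\<^sup>+t. ?e t \<partial>lborel) + (\<integral>\<^sup>+t. ?e (-t) \<partial>lborel))"
    by (subst nn_integral_cmult) (auto simp: nn_integral_add)
  also have "\<dots> < \<infinity>" using one two by (simp add: ennreal_mult_less_top)
  finally show ?thesis .
qed

lemma exp_sum_integrable: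
  fixes \<beta> :: real assumes b: "\<beta> > 0"
  shows "integrable (lborel::'a::euclidean_space measure) (\<lambda>x. exp (- \<beta> * (\<Sum>b\<in>Basis. \<bar>x \<bullet> b\<bar>)))"
proof (rule integrableI_nonneg)
  show "(\<lambda>x. exp (- \<beta> * (\<Sum>b\<in>Basis. \<bar>x \<bullet> b\<bar>))) \<in> borel_measurable (lborel::'a measure)"
    by measurable
  show "AE x in lborel. 0 \<le> exp (- \<beta> * (\<Sum>b\<in>(Basis::'a set). \<bar>x \<bullet> b\<bar>))" by simp
  have eq: "ennreal (exp (- \<beta> * (\<Sum>b\<in>Basis. \<bar>x \<bullet> b\<bar>))) = (\<Prod>b\<in>Basis. ennreal (exp (- \<beta> * \<bar>x \<bullet> b\<bar>)))" for x :: 'a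
    by (simp add: sum_distrib_left exp_sum[symmetric] prod_ennreal sum_negf)
  have "(\<integral>\<^sup>+x. ennreal (exp (- \<beta> * (\<Sum>b\<in>Basis. \<bar>x \<bullet> b\<bar>))) \<partial>(lborel::'a measure))
      = (\<Prod>b\<in>(Basis::'a set). (\<integral>\<^sup>+t. ennreal (exp (- \<beta> * \<bar>t\<bar>)) \<partial>lborel))"
    unfolding eq by (rule nn_integral_lborel_prod) auto
  also have "\<dots> < \<infinity>"
    using exp_abs_nn_finite[OF b] by (simp add: less_top[symmetric] power_eq_top_ennreal)
  finally show "(\<integral>\<^sup>+x. ennreal (exp (- \<beta> * (\<Sum>b\<in>Basis. \<bar>x \<bullet> b\<bar>))) \<partial>(lborel::'a measure)) < \<infinity>" .
qed

lemma moment_integrable: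
  fixes U :: "'a::euclidean_space \<Rightarrow> real" and p a R :: real
  assumes U_meas: "U \<in> borel_measurable borel"
    and U_int: "integrable lborel (\<lambda>x. exp (- U x))"
    and p: "p \<ge> 1" and a: "a > 0"
    and gr: "\<forall>x. R \<le> norm x \<longrightarrow> a * norm x powr p \<le> U x"
  shows "integrable lborel (\<lambda>x. exp (- U x) * norm x powr p)"
proof -
  define R' where "R' = max R 1"
  define d where "d = real DIM('a)"
  have d: "d \<ge> 1" unfolding d_def by simp
  define \<beta> where "\<beta> = a / (2 * d)"
  have \<beta>: "\<beta> > 0" using a d by (simp add: \<beta>_def)
  have bound: "norm (exp (- U x) * norm x powr p) \<le>
      R' powr p * exp (- U x) + (2/a) * exp (- \<beta> * (\<Sum>b\<in>Basis. \<bar>x \<bullet> b\<bar>))" for x :: 'a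
  proof (cases "norm x < R'")
    case True
    have "norm x powr p \<le> R' powr p" using True p by (intro powr_mono2) auto
    then have h1: "exp (- U x) * norm x powr p \<le> R' powr p * exp (- U x)"
      using mult_left_mono[of "norm x powr p" "R' powr p" "exp (- U x)"] by (simp add: mult.commute)
    have h2: "0 \<le> (2/a) * exp (- \<beta> * (\<Sum>b\<in>Basis. \<bar>x \<bullet> b\<bar>))" using a by simp
    have h3: "norm (exp (- U x) * norm x powr p) = exp (- U x) * norm x powr p" by simp
    show ?thesis using h1 h2 h3 by linarith
  next
    case False
    then have x1: "norm x \<ge> 1" and xR: "norm x \<ge> R" by (auto simp: R'_def)
    define s where "s = norm x powr p"
    have s: "s \<ge> norm x" unfolding s_def
      using powr_mono[OF p x1] x1 by simp
    have U: "U x \<ge> a * s" using gr xR s_def by auto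
    have sum: "(\<Sum>b\<in>Basis. \<bar>x \<bullet> b\<bar>) \<le> d * norm x"
    proof -
      have "(\<Sum>b\<in>Basis. \<bar>x \<bullet> b\<bar>) \<le> (\<Sum>b\<in>(Basis::'a set). norm x)"
        by (intro sum_mono) (simp add: Basis_le_norm)
      then show ?thesis by (simp add: d_def)
    qed
    have e1: "exp (- U x) \<le> exp (- a * s)" using U by simp
    have "a * s / 2 \<le> exp (a * s / 2)" using exp_ge_add_one_self[of "a * s / 2"] by linarith
    then have e2: "s * exp (- (a * s / 2)) \<le> 2 / a" using a
      by (simp add: exp_minus field_simps)
    have e3: "exp (- (a * s / 2)) \<le> exp (- \<beta> * (\<Sum>b\<in>Basis. \<bar>x \<bullet> b\<bar>))"
    proof -
      have "\<beta> * (\<Sum>b\<in>Basis. \<bar>x \<bullet> b\<bar>) \<le> \<beta> * (d * norm x)"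
        using sum \<beta> by (intro mult_left_mono) auto
      also have "\<dots> = a * norm x / 2" using d by (simp add: \<beta>_def)
      also have "\<dots> \<le> a * s / 2" using s a by simp
      finally show ?thesis by simp
    qed
    have s0: "s \<ge> 0" using s norm_ge_zero[of x] by linarith
    have "exp (- U x) * s \<le> exp (- a * s) * s"
      using e1 s0 by (intro mult_right_mono) auto
    also have "\<dots> = exp (- (a * s / 2)) * (s * exp (- (a * s / 2)))"
      by (simp add: exp_add[symmetric])
    also have "\<dots> \<le> exp (- \<beta> * (\<Sum>b\<in>Basis. \<bar>x \<bullet> b\<bar>)) * (2 / a)"
      using e2 e3 s0 by (intro mult_mono) auto
    finally have h1: "exp (- U x) * s \<le> (2/a) * exp (- \<beta> * (\<Sum>b\<in>Basis. \<bar>x \<bullet> b\<bar>))"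
      by (simp add: mult.commute)
    have h2: "0 \<le> R' powr p * exp (- U x)" by simp
    have h3: "norm (exp (- U x) * norm x powr p) = exp (- U x) * s" by (simp add: s_def)
    show ?thesis using h1 h2 h3 by linarith
  qed
  show ?thesis
  proof (rule Bochner_Integration.integrable_bound)
    show "integrable lborel (\<lambda>x. R' powr p * exp (- U x) + (2/a) * exp (- \<beta> * (\<Sum>b\<in>Basis. \<bar>x \<bullet> b\<bar>)))"
      using U_int exp_sum_integrable[OF \<beta>, where 'a='a] by (intro Bochner_Integration.integrable_add integrable_mult_right)
    show "(\<lambda>x. exp (- U x) * norm x powr p) \<in> borel_measurable lborel"
      using U_meas by measurable
    show "AE x in lborel. norm (exp (- U x) * norm x powr p) \<le>
        norm (R' powr p * exp (- U x) + (2/a) * exp (- \<beta> * (\<Sum>b\<in>Basis. \<bar>x \<bullet> b\<bar>)))"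
      using bound a by (intro AE_I2) (simp add: abs_of_nonneg)
  qed
qed

lemma Z_facts:
  fixes g U :: "'a::euclidean_space \<Rightarrow> real" and k M :: real
  assumes g[measurable]: "g \<in> borel_measurable borel" and gb: "\<forall>x. \<bar>g x\<bar> \<le> M"
    and k: "k > 0"
    and U_meas[measurable]: "U \<in> borel_measurable borel"
    and U_int: "integrable lborel (\<lambda>x. exp (- U x))"
    and U_norm: "(\<integral>x. exp (- U x) \<partial>lborel) = 1"
  shows "integrable lborel (\<lambda>x. exp (- k * g x - U x))"
    and "exp (- (k * M)) \<le> (\<integral>x. exp (- k * g x - U x) \<partial>lborel)"
    and "(\<integral>x. exp (- k * g x - U x) \<partial>lborel) \<le> exp (k * M)"
proof -
  have pt: "exp (- (k * M)) \<le> exp (- k * g x) \<and> exp (- k * g x) \<le> exp (k * M)" for x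
  proof -
    have "\<bar>k * g x\<bar> \<le> k * M" using gb k by (simp add: abs_mult mult_left_mono)
    then show ?thesis by auto
  qed
  have eq: "exp (- k * g x - U x) = exp (- k * g x) * exp (- U x)" for x
    by (simp add: exp_diff exp_minus field_simps)
  show int: "integrable lborel (\<lambda>x. exp (- k * g x - U x))"
  proof (rule Bochner_Integration.integrable_bound)
    show "integrable lborel (\<lambda>x. exp (k * M) * exp (- U x))"
      using U_int by (rule integrable_mult_right)
    show "(\<lambda>x. exp (- k * g x - U x)) \<in> borel_measurable lborel" by measurable
    have "exp (- k * g x - U x) \<le> exp (k * M) * exp (- U x)" for x
      unfolding eq using pt[of x] by (intro mult_right_mono) auto
    then show "AE x in lborel. norm (exp (- k * g x - U x)) \<le> norm (exp (k * M) * exp (- U x))"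
      by (intro AE_I2) simp
  qed
  have lo: "exp (- (k * M)) * exp (- U x) \<le> exp (- k * g x - U x)" for x
    unfolding eq using pt[of x] by (intro mult_right_mono) auto
  have hi: "exp (- k * g x - U x) \<le> exp (k * M) * exp (- U x)" for x
    unfolding eq using pt[of x] by (intro mult_right_mono) auto
  have "(\<integral>x. exp (- (k * M)) * exp (- U x) \<partial>lborel) \<le> (\<integral>x. exp (- k * g x - U x) \<partial>lborel)"
    using U_int int lo by (intro integral_mono) auto
  then show "exp (- (k * M)) \<le> (\<integral>x. exp (- k * g x - U x) \<partial>lborel)"
    using U_norm by simp
  have "(\<integral>x. exp (- k * g x - U x) \<partial>lborel) \<le> (\<integral>x. exp (k * M) * exp (- U x) \<partial>lborel)"
    using U_int int hi by (intro integral_mono) auto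
  then show "(\<integral>x. exp (- k * g x - U x) \<partial>lborel) \<le> exp (k * M)"
    using U_norm by simp
qed

lemma exp_lip:
  fixes A B K :: real
  assumes "A \<le> K" "B \<le> K"
  shows "\<bar>exp A - exp B\<bar> \<le> exp K * \<bar>A - B\<bar>"
proof -
  have *: "exp Y - exp X \<le> exp K * (Y - X)" if "X \<le> Y" "Y \<le> K" for X Y :: real
  proof -
    have "1 - exp (X - Y) \<le> Y - X" using exp_ge_add_one_self[of "X - Y"] by linarith
    then have "exp Y * (1 - exp (X - Y)) \<le> exp Y * (Y - X)" by (intro mult_left_mono) auto
    also have "\<dots> \<le> exp K * (Y - X)" using that by (intro mult_right_mono) auto
    finally show ?thesis by (simp add: algebra_simps exp_diff)
  qed
  show ?thesis
  proof (cases "A \<le> B")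
    case True
    then show ?thesis using *[of A B] assms by (simp add: abs_if)
  next
    case False
    then show ?thesis using *[of B A] assms by (simp add: abs_if)
  qed
qed

lemma Z_diff:
  fixes g1 g2 U :: "'a::euclidean_space \<Rightarrow> real" and k M \<delta> :: real
  assumes g1[measurable]: "g1 \<in> borel_measurable borel" and g1b: "\<forall>x. \<bar>g1 x\<bar> \<le> M"
    and g2[measurable]: "g2 \<in> borel_measurable borel" and g2b: "\<forall>x. \<bar>g2 x\<bar> \<le> M"
    and d: "\<forall>x. \<bar>g1 x - g2 x\<bar> \<le> \<delta>"
    and k: "k > 0"
    and U_meas[measurable]: "U \<in> borel_measurable borel"
    and U_int: "integrable lborel (\<lambda>x. exp (- U x))"
    and U_norm: "(\<integral>x. exp (- U x) \<partial>lborel) = 1"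
  shows "(\<integral>x. exp (- k * g1 x - U x) \<partial>lborel) \<le> (\<integral>x. exp (- k * g2 x - U x) \<partial>lborel) + exp (k * M) * (k * \<delta>)"
proof -
  have eq: "exp (- k * g x - U x) = exp (- k * g x) * exp (- U x)" for g :: "'a \<Rightarrow> real" and x
    by (simp add: exp_diff exp_minus field_simps)
  have pt: "exp (- k * g1 x) \<le> exp (- k * g2 x) + exp (k * M) * (k * \<delta>)" for x
  proof -
    have a0: "- k * g x \<le> k * M" if "\<bar>g x\<bar> \<le> M" for g :: "'a \<Rightarrow> real"
    proof -
      have "- g x \<le> M" using that by linarith
      then show ?thesis using mult_left_mono[of "- g x" M k] k by simp
    qed
    have a: "- k * g1 x \<le> k * M" "- k * g2 x \<le> k * M"
      using a0 g1b g2b by auto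
    have "\<bar>exp (- k * g1 x) - exp (- k * g2 x)\<bar> \<le> exp (k * M) * \<bar>- k * g1 x - (- k * g2 x)\<bar>"
      by (rule exp_lip[OF a])
    also have "\<bar>- k * g1 x - (- k * g2 x)\<bar> = k * \<bar>g1 x - g2 x\<bar>"
    proof -
      have "- k * g1 x - (- k * g2 x) = k * (g2 x - g1 x)" by (simp add: algebra_simps)
      then show ?thesis using k by (simp add: abs_mult abs_minus_commute)
    qed
    also have "exp (k * M) * (k * \<bar>g1 x - g2 x\<bar>) \<le> exp (k * M) * (k * \<delta>)"
      using d k by (intro mult_left_mono) auto
    finally show ?thesis by linarith
  qed
  have i1: "integrable lborel (\<lambda>x. exp (- k * g1 x - U x))"
    and i2: "integrable lborel (\<lambda>x. exp (- k * g2 x - U x))"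
    using Z_facts[OF g1 g1b k U_meas U_int U_norm] Z_facts[OF g2 g2b k U_meas U_int U_norm] by auto
  have "(\<integral>x. exp (- k * g1 x - U x) \<partial>lborel) \<le>
        (\<integral>x. exp (- k * g2 x - U x) + exp (k * M) * (k * \<delta>) * exp (- U x) \<partial>lborel)"
  proof (rule integral_mono)
    show "integrable lborel (\<lambda>x. exp (- k * g2 x - U x) + exp (k * M) * (k * \<delta>) * exp (- U x))"
      using i2 U_int by (intro Bochner_Integration.integrable_add integrable_mult_right)
    show "exp (- k * g1 x - U x) \<le> exp (- k * g2 x - U x) + exp (k * M) * (k * \<delta>) * exp (- U x)" for x
    proof -
      have "exp (- k * g1 x) * exp (- U x) \<le> (exp (- k * g2 x) + exp (k * M) * (k * \<delta>)) * exp (- U x)"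
        using pt[of x] by (intro mult_right_mono) auto
      then show ?thesis unfolding eq[of g1] eq[of g2] distrib_right by simp
    qed
  qed (rule i1)
  also have "\<dots> = (\<integral>x. exp (- k * g2 x - U x) \<partial>lborel) + exp (k * M) * (k * \<delta>)"
    using i2 U_int U_norm by (subst Bochner_Integration.integral_add) auto
  finally show ?thesis .
qed

lemma frac_lip:
  fixes A B Z1 Z2 E \<eta> :: real
  assumes "\<bar>A - B\<bar> \<le> \<eta>" "\<bar>Z1 - Z2\<bar> \<le> \<eta>" "0 \<le> B" "B \<le> E" "E > 0"
    "Z1 \<ge> 1 / E" "Z2 \<ge> 1 / E"
  shows "\<bar>A / Z1 - B / Z2\<bar> \<le> E * \<eta> + E ^ 3 * \<eta>"
proof -
  have Z1: "Z1 > 0" and Z2: "Z2 > 0" using assms by (auto intro: less_le_trans[of 0 "1/E"])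
  have i1: "1 / Z1 \<le> E" using assms Z1 by (simp add: field_simps)
  have i2: "1 / Z2 \<le> E" using assms Z2 by (simp add: field_simps)
  have eq: "A / Z1 - B / Z2 = (A - B) * (1 / Z1) + B * (Z2 - Z1) * (1 / Z1) * (1 / Z2)"
    using Z1 Z2 by (simp add: field_simps)
  have t1: "\<bar>(A - B) * (1 / Z1)\<bar> \<le> \<eta> * E"
  proof -
    have "\<bar>(A - B) * (1 / Z1)\<bar> = \<bar>A - B\<bar> * (1 / Z1)" using Z1 by (simp add: abs_mult)
    also have "\<dots> \<le> \<eta> * E" using assms i1 Z1 by (intro mult_mono) auto
    finally show ?thesis .
  qed
  have t2: "\<bar>B * (Z2 - Z1) * (1 / Z1) * (1 / Z2)\<bar> \<le> E * \<eta> * E * E"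
  proof -
    have "\<bar>B * (Z2 - Z1) * (1 / Z1) * (1 / Z2)\<bar> = B * \<bar>Z2 - Z1\<bar> * (1 / Z1) * (1 / Z2)"
      using Z1 Z2 assms by (simp add: abs_mult)
    also have "\<dots> \<le> E * \<eta> * E * E"
      using assms Z1 Z2 i1 i2
      by (intro mult_mono) (auto simp: abs_minus_commute)
    finally show ?thesis .
  qed
  show ?thesis
  proof -
    have e1: "E * \<eta> * E * E = E ^ 3 * \<eta>" by (simp add: power3_eq_cube mult_ac)
    have e2: "\<eta> * E = E * \<eta>" by (simp add: mult_ac)
    show ?thesis unfolding eq
      using abs_triangle_ineq[of "(A - B) * (1 / Z1)" "B * (Z2 - Z1) * (1 / Z1) * (1 / Z2)"] t1 t2 e1 e2
      by linarith
  qed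
qed

lemma frac_bounds:
  fixes A Z K :: real
  assumes "exp (- K) \<le> A" "A \<le> exp K" "exp (- K) \<le> Z" "Z \<le> exp K"
  shows "exp (- (2 * K)) \<le> A / Z \<and> A / Z \<le> exp (2 * K)"
proof -
  have Z: "Z > 0" using assms(3) by (meson exp_gt_zero less_le_trans)
  have A0: "A \<ge> 0" using assms(1) by (meson exp_ge_zero order_trans)
  have "exp (- K) / exp K \<le> A / Z"
    using assms Z A0 by (intro frac_le) auto
  moreover have "A / Z \<le> exp K / exp (- K)"
    using assms Z A0 by (intro frac_le) auto
  moreover have "exp (- K) / exp K = exp (- (2 * K))"
    by (simp add: exp_diff[symmetric])
  moreover have "exp K / exp (- K) = exp (2 * K)"
    by (simp add: exp_diff[symmetric])
  ultimately show ?thesis by simp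
qed


theorem proposition14:
  fixes p \<sigma> :: real
    and F :: "('a::euclidean_space) measure \<Rightarrow> real"
    and dF :: "'a measure \<Rightarrow> 'a \<Rightarrow> real"
    and U :: "'a \<Rightarrow> real"
    and L_F M_F :: real
  assumes p: "p \<ge> 1" and sigma: "\<sigma> > 0"
    and F_nonneg: "\<forall>m\<in>Prob. F m \<ge> 0"
    and dF_cont: "\<forall>m\<in>Prob. continuous_on UNIV (dF m)"
    and F_deriv: "\<forall>m0\<in>Prob. \<forall>m1\<in>Prob.
        ((\<lambda>l. (\<integral>x. dF (mixture l m0 m1) x \<partial>m1) - (\<integral>x. dF (mixture l m0 m1) x \<partial>m0))
           has_integral (F m1 - F m0)) {0..1}"
    and LF_pos: "L_F > 0" and MF_pos: "M_F > 0"
    and dF_lip: "\<forall>m\<in>Prob. \<forall>m'\<in>Prob. \<forall>x x'.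
        ennreal \<bar>dF m x - dF m' x'\<bar> \<le> ennreal L_F * (Wass p m m' + ennreal (dist x x'))"
    and dF_bdd: "\<forall>m\<in>Prob. \<forall>x. \<bar>dF m x\<bar> \<le> M_F"
    and U_meas: "U \<in> borel_measurable borel"
    and U_int: "integrable lborel (\<lambda>x. exp (- U x))"
    and U_norm: "(\<integral>x. exp (- U x) \<partial>lborel) = 1"
    and U_essinf: "\<exists>b. AE x in lborel. U x \<ge> b"
    and U_growth: "Liminf at_infinity (\<lambda>x. ereal (U x / norm x powr p)) > 0"
  shows "(\<forall>m\<in>Prob_p p.
            integrable lborel (\<lambda>x. exp (- (2 / \<sigma>\<^sup>2) * dF m x - U x))
          \<and> Zconst \<sigma> dF U m > 0
          \<and> density lborel (\<lambda>x. ennreal (hat_dens \<sigma> dF U m x)) \<in> Prob_p p)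
       \<and> (\<exists>c C. 0 < c \<and> c < 1 \<and> 1 < C \<and>
            (\<forall>m\<in>Prob_p p. \<forall>x. c * exp (- U x) \<le> hat_dens \<sigma> dF U m x
                                 \<and> hat_dens \<sigma> dF U m x \<le> C * exp (- U x)))
       \<and> (\<exists>L>0. \<forall>m\<in>Prob_p p. \<forall>m'\<in>Prob_p p. \<forall>x.
            ennreal \<bar>hat_dens \<sigma> dF U m x - hat_dens \<sigma> dF U m' x\<bar>
              \<le> ennreal L * Wass p m m' * ennreal (exp (- U x)))"
  proof -
  let ?k = "2 / \<sigma>\<^sup>2"
  have k: "?k > 0" using sigma by simp
  define K where "K = ?k * M_F"
  have K: "K > 0" using k MF_pos by (simp add: K_def)
  define E where "E = exp K"
  have E: "E > 0" by (simp add: E_def)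
  have PP: "m \<in> Prob" if "m \<in> Prob_p p" for m using that by (simp add: Prob_p_def)
  have meas: "dF m \<in> borel_measurable borel" if "m \<in> Prob" for m
    using dF_cont that by (simp add: borel_measurable_continuous_onI)
  have bd: "\<forall>x. \<bar>dF m x\<bar> \<le> M_F" if "m \<in> Prob" for m using dF_bdd that by simp
  have ZF: "integrable lborel (\<lambda>x. exp (- ?k * dF m x - U x))"
    "exp (- K) \<le> Zconst \<sigma> dF U m" "Zconst \<sigma> dF U m \<le> exp K" if "m \<in> Prob" for m
    using Z_facts[OF meas[OF that] bd[OF that] k U_meas U_int U_norm]
    by (auto simp: Zconst_def K_def)
  have Zpos: "Zconst \<sigma> dF U m > 0" if "m \<in> Prob" for m
    using ZF(2)[OF that] by (meson exp_gt_zero less_le_trans)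
  have pt: "exp (- K) \<le> exp (- ?k * dF m x) \<and> exp (- ?k * dF m x) \<le> exp K" if "m \<in> Prob" for m x
  proof -
    have "\<bar>?k * dF m x\<bar> = ?k * \<bar>dF m x\<bar>" using k by (simp add: abs_mult)
    also have "\<dots> \<le> ?k * M_F" using bd[OF that] k by (intro mult_left_mono) auto
    finally have "\<bar>?k * dF m x\<bar> \<le> K" by (simp add: K_def)
    then have h: "?k * dF m x \<le> K" "- (?k * dF m x) \<le> K" by (simp_all only: abs_le_iff)
    have e: "- ?k * dF m x = - (?k * dF m x)" by (rule mult_minus_left)
    show ?thesis unfolding e exp_le_cancel_iff using h by linarith
  qed
  have hat_eq: "hat_dens \<sigma> dF U m x = exp (- U x) * (exp (- ?k * dF m x) / Zconst \<sigma> dF U m)" for m x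
  proof -
    have "exp (- ?k * dF m x - U x) = exp (- ?k * dF m x) * exp (- U x)"
      by (simp add: exp_add[symmetric])
    then show ?thesis by (simp add: hat_dens_def)
  qed
  have hb: "exp (- (2 * K)) * exp (- U x) \<le> hat_dens \<sigma> dF U m x \<and> hat_dens \<sigma> dF U m x \<le> exp (2 * K) * exp (- U x)"
    if "m \<in> Prob" for m x
  proof -
    have "exp (- (2 * K)) \<le> exp (- ?k * dF m x) / Zconst \<sigma> dF U m \<and> exp (- ?k * dF m x) / Zconst \<sigma> dF U m \<le> exp (2 * K)"
      using frac_bounds pt[OF that, of x] ZF(2,3)[OF that] by blast
    then have "exp (- U x) * exp (- (2 * K)) \<le> exp (- U x) * (exp (- ?k * dF m x) / Zconst \<sigma> dF U m)"
      "exp (- U x) * (exp (- ?k * dF m x) / Zconst \<sigma> dF U m) \<le> exp (- U x) * exp (2 * K)"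
      by (intro mult_left_mono; simp)+
    then show ?thesis unfolding hat_eq by (simp only: mult.commute)
  qed
  obtain y where y: "0 < y" "y < Liminf at_infinity (\<lambda>x. ereal (U x / norm x powr p))"
    using dense[OF U_growth] by blast
  obtain a where a: "a > 0" "ereal a < Liminf at_infinity (\<lambda>x. ereal (U x / norm x powr p))"
  proof (cases y)
    case (real r) then show ?thesis using y that by auto
  qed (use y in auto)
  obtain b where b: "\<forall>x. b \<le> norm x \<longrightarrow> ereal a < ereal (U x / norm x powr p)"
    using less_LiminfD[OF a(2)] unfolding eventually_at_infinity by blast
  have gr: "\<forall>x. max b 1 \<le> norm x \<longrightarrow> a * norm x powr p \<le> U x"
  proof (intro allI impI)
    fix x :: 'a assume x: "max b 1 \<le> norm x"
    then have "norm x > 0" by linarith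
    then have "norm x powr p > 0" by simp
    moreover have "a < U x / norm x powr p" using b x by auto
    ultimately show "a * norm x powr p \<le> U x" by (simp add: pos_less_divide_eq)
  qed
  have mom: "integrable lborel (\<lambda>x. exp (- U x) * norm x powr p)"
    by (rule moment_integrable[OF U_meas U_int p a(1) gr])
  have part1: "integrable lborel (\<lambda>x. exp (- (2 / \<sigma>\<^sup>2) * dF m x - U x))
          \<and> Zconst \<sigma> dF U m > 0
          \<and> density lborel (\<lambda>x. ennreal (hat_dens \<sigma> dF U m x)) \<in> Prob_p p" if mp: "m \<in> Prob_p p" for m
  proof -
    have m: "m \<in> Prob" using PP[OF mp] .
    note [measurable] = meas[OF m]
    have hm[measurable]: "(\<lambda>x. hat_dens \<sigma> dF U m x) \<in> borel_measurable borel"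
      unfolding hat_dens_def using U_meas by measurable
    have hnn: "hat_dens \<sigma> dF U m x \<ge> 0" for x
      using Zpos[OF m] by (simp add: hat_dens_def)
    have hint: "integrable lborel (\<lambda>x. hat_dens \<sigma> dF U m x)"
      unfolding hat_dens_def using ZF(1)[OF m] by (rule integrable_divide)
    have hone: "(\<integral>x. hat_dens \<sigma> dF U m x \<partial>lborel) = 1"
      unfolding hat_dens_def using Zpos[OF m] by (simp add: Zconst_def)
    have ps: "prob_space (density lborel (\<lambda>x. ennreal (hat_dens \<sigma> dF U m x)))"
    proof (rule prob_spaceI)
      have "emeasure (density lborel (\<lambda>x. ennreal (hat_dens \<sigma> dF U m x))) UNIV
          = (\<integral>\<^sup>+x. ennreal (hat_dens \<sigma> dF U m x) \<partial>lborel)"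
        by (simp add: emeasure_density)
      also have "\<dots> = ennreal (\<integral>x. hat_dens \<sigma> dF U m x \<partial>lborel)"
        using hint hnn by (intro nn_integral_eq_integral) auto
      finally show "emeasure (density lborel (\<lambda>x. ennreal (hat_dens \<sigma> dF U m x)))
          (space (density lborel (\<lambda>x. ennreal (hat_dens \<sigma> dF U m x)))) = 1"
        using hone by simp
    qed
    have mi: "integrable (density lborel (\<lambda>x. ennreal (hat_dens \<sigma> dF U m x))) (\<lambda>x. norm x powr p)"
    proof (subst integrable_density)
      show "integrable lborel (\<lambda>x. hat_dens \<sigma> dF U m x *\<^sub>R norm x powr p)"
      proof (rule Bochner_Integration.integrable_bound)
        show "integrable lborel (\<lambda>x. exp (2 * K) * (exp (- U x) * norm x powr p))"
          using mom by (rule integrable_mult_right)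
        show "(\<lambda>x. hat_dens \<sigma> dF U m x *\<^sub>R norm x powr p) \<in> borel_measurable lborel"
          by measurable
        have "hat_dens \<sigma> dF U m x * norm x powr p \<le> exp (2 * K) * exp (- U x) * norm x powr p" for x
          using hb[OF m, of x] by (intro mult_right_mono) auto
        then show "AE x in lborel. norm (hat_dens \<sigma> dF U m x *\<^sub>R norm x powr p)
            \<le> norm (exp (2 * K) * (exp (- U x) * norm x powr p))"
          using hnn by (intro AE_I2) (simp add: mult.assoc)
      qed
    qed (use hnn in auto)
    show ?thesis
      using ZF(1)[OF m] Zpos[OF m] ps mi
      by (simp add: Prob_p_def Prob_def)
  qed
  have part2: "\<exists>c C. 0 < c \<and> c < 1 \<and> 1 < C \<and>
            (\<forall>m\<in>Prob_p p. \<forall>x. c * exp (- U x) \<le> hat_dens \<sigma> dF U m x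
                                 \<and> hat_dens \<sigma> dF U m x \<le> C * exp (- U x))"
    using hb PP K by (intro exI[of _ "exp (- (2 * K))"] exI[of _ "exp (2 * K)"]) auto
  define L where "L = ?k * L_F * (E * E + E ^ 3 * E)"
  have L: "L > 0" unfolding L_def using k LF_pos E by (intro mult_pos_pos add_pos_pos) auto
  have part3: "ennreal \<bar>hat_dens \<sigma> dF U m x - hat_dens \<sigma> dF U m' x\<bar>
              \<le> ennreal L * Wass p m m' * ennreal (exp (- U x))"
    if mp: "m \<in> Prob_p p" and mp': "m' \<in> Prob_p p" for m m' x
  proof -
    have m: "m \<in> Prob" and m': "m' \<in> Prob" using PP mp mp' by auto
    show ?thesis
    proof (cases "Wass p m m'")
      case top
      then show ?thesis using L by (simp add: ennreal_mult_top ennreal_top_mult)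
    next
      case (real w)
      have dl: "\<forall>z. \<bar>dF m z - dF m' z\<bar> \<le> L_F * w"
      proof
        fix z
        have "ennreal \<bar>dF m z - dF m' z\<bar> \<le> ennreal L_F * (Wass p m m' + ennreal (dist z z))"
          using dF_lip m m' by blast
        also have "\<dots> = ennreal (L_F * w)" using real LF_pos by (simp add: ennreal_mult)
        finally show "\<bar>dF m z - dF m' z\<bar> \<le> L_F * w"
          using real LF_pos by (simp add: ennreal_le_iff)
      qed
      have dl': "\<forall>z. \<bar>dF m' z - dF m z\<bar> \<le> L_F * w" using dl by (simp add: abs_minus_commute)
      let ?A = "exp (- ?k * dF m x)" and ?B = "exp (- ?k * dF m' x)"
      let ?Z1 = "Zconst \<sigma> dF U m" and ?Z2 = "Zconst \<sigma> dF U m'"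
      let ?\<eta> = "E * (?k * (L_F * w))"
      have AB: "\<bar>?A - ?B\<bar> \<le> ?\<eta>"
      proof -
        have "\<bar>?A - ?B\<bar> \<le> exp K * \<bar>- ?k * dF m x - (- ?k * dF m' x)\<bar>"
          using pt[OF m, of x] pt[OF m', of x] bd[OF m] bd[OF m'] k
          by (intro exp_lip) (auto simp: K_def abs_le_iff intro: mult_left_mono)
        also have "\<bar>- ?k * dF m x - (- ?k * dF m' x)\<bar> = ?k * \<bar>dF m x - dF m' x\<bar>"
        proof -
          have "- ?k * dF m x - (- ?k * dF m' x) = ?k * (dF m' x - dF m x)" by (simp only: right_diff_distrib mult_minus_left)
          then have "\<bar>- ?k * dF m x - (- ?k * dF m' x)\<bar> = ?k * \<bar>dF m' x - dF m x\<bar>"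
            by (simp only: abs_mult abs_of_pos[OF k])
          then show ?thesis by (simp only: abs_minus_commute[of "dF m' x"])
        qed
        also have "exp K * (?k * \<bar>dF m x - dF m' x\<bar>) \<le> ?\<eta>"
          unfolding E_def using dl k by (intro mult_left_mono) auto
        finally show ?thesis .
      qed
      have ZZ: "\<bar>?Z1 - ?Z2\<bar> \<le> ?\<eta>"
        using Z_diff[OF meas[OF m] bd[OF m] meas[OF m'] bd[OF m'] dl k U_meas U_int U_norm]
          Z_diff[OF meas[OF m'] bd[OF m'] meas[OF m] bd[OF m] dl' k U_meas U_int U_norm]
        unfolding Zconst_def E_def K_def by (simp add: abs_le_iff)
      have Einv: "1 / E = exp (- K)" by (simp add: E_def exp_minus field_simps)
      have fl: "\<bar>?A / ?Z1 - ?B / ?Z2\<bar> \<le> E * ?\<eta> + E ^ 3 * ?\<eta>"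
      proof (rule frac_lip[OF AB ZZ _ _ E])
        show "1 / E \<le> ?Z1" using ZF(2)[OF m] unfolding Einv .
        show "1 / E \<le> ?Z2" using ZF(2)[OF m'] unfolding Einv .
        show "0 \<le> ?B" by simp
        show "?B \<le> E" using pt[OF m', of x] unfolding E_def by blast
      qed
      have "\<bar>hat_dens \<sigma> dF U m x - hat_dens \<sigma> dF U m' x\<bar> = exp (- U x) * \<bar>?A / ?Z1 - ?B / ?Z2\<bar>"
        unfolding hat_eq right_diff_distrib[symmetric] abs_mult by simp
      also have "\<dots> \<le> exp (- U x) * (E * ?\<eta> + E ^ 3 * ?\<eta>)"
        using fl by (intro mult_left_mono) auto
      also have "\<dots> = L * w * exp (- U x)"
        by (simp add: L_def algebra_simps add_divide_distrib)
      finally have "\<bar>hat_dens \<sigma> dF U m x - hat_dens \<sigma> dF U m' x\<bar> \<le> L * w * exp (- U x)" .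
      then have "ennreal \<bar>hat_dens \<sigma> dF U m x - hat_dens \<sigma> dF U m' x\<bar> \<le> ennreal (L * w * exp (- U x))"
        by (rule ennreal_leI)
      also have "\<dots> = ennreal L * Wass p m m' * ennreal (exp (- U x))"
        using real L by (simp add: ennreal_mult)
      finally show ?thesis .
    qed
  qed
  show ?thesis using part1 part2 part3 L by blast
qed

end
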